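(* Let $\mathcal L$ be a finite propositional signature, $\Gamma$ a finite nonempty theory over $\mathcal L$, $\mathcal L'\supseteq\mathcal L$ a signature, and $M$ an HT-interpretation over $\mathcal L'$. Then $M\in E_s(\Gamma)$ (equivalence interpretations over $\mathcal L'$) if and only if $M|_{\mathcal L}$ is totality preserving and $M|_{\mathcal L}\models\bigvee_{\phi\in\Gamma}\bigwedge_{\psi\in\Gamma_\phi}\psi$, where $\Gamma_\phi=\{\neg\neg\psi\mid\psi\in\Gamma\}\cup\{\phi\to(\neg\neg a\to a)\mid a\in\mathcal L\}$.
   Context: A propositional signature is a set of atoms; formulas are built from atoms and $\bot$ with $\wedge,\vee,\to$; $\neg\phi$ abbreviates $\phi\to\bot$. An HT-interpretation over $\mathcal L'$ is a pair $(X,Y)$ with $X\subseteq Y\subseteq\mathcal L'$; total if $X=Y$. HT-satisfaction: $(X,Y)\models a$ iff $a\in X$; $(X,Y)\not\models\bot$; $\wedge,\vee$ componentwise; $(X,Y)\models\phi\to\psi$ iff (i) $(X,Y)\not\models\phi$ or $(X,Y)\models\psi$, and (ii) $Y\models\phi\to\psi$ classically. A theory is satisfied iff each member is. A here-countermodel of $\Gamma$ is an $(X,Y)$ with $(X,Y)\not\models\Gamma$ and $Y\models\Gamma$; $E_s(\Gamma)$ is the set of HT-interpretations that are total HT-models of $\Gamma$ or here-countermodels of $\Gamma$. For $M=(X,Y)$ over $\mathcal L'$, $M|_{\mathcal L}=(X\cap\mathcal L,Y\cap\mathcal L)$; the restriction is totality preserving if $X\subsetneq Y$ implies $X\cap\mathcal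 L\subsetneq Y\cap\mathcal L$. *)

theory Defs
  imports Main
begin

datatype 'a form = Atom 'a | Bot | And "'a form" "'a form" | Or "'a form" "'a form"
  | Imp "'a form" "'a form"

definition Neg :: "'a form \<Rightarrow> 'a form" where "Neg \<phi> = Imp \<phi> Bot"

definition Top :: "'a form" where "Top = Imp Bot Bot"

fun atoms :: "'a form \<Rightarrow> 'a set" where
  "atoms (Atom a) = {a}"
| "atoms Bot = {}"
| "atoms (And \<phi> \<psi>) = atoms \<phi> \<union> atoms \<psi>"
| "atoms (Or \<phi> \<psi>) = atoms \<phi> \<union> atoms \<psi>"
| "atoms (Imp \<phi> \<psi>) = atoms \<phi> \<union> atoms \<psi>"

fun csat :: "'a set \<Rightarrow> 'a form \<Rightarrow> bool" where
  "csat Y (Atom a) = (a \<in> Y)"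
| "csat Y Bot = False"
| "csat Y (And \<phi> \<psi>) = (csat Y \<phi> \<and> csat Y \<psi>)"
| "csat Y (Or \<phi> \<psi>) = (csat Y \<phi> \<or> csat Y \<psi>)"
| "csat Y (Imp \<phi> \<psi>) = (csat Y \<phi> \<longrightarrow> csat Y \<psi>)"

fun htsat :: "'a set \<times> 'a set \<Rightarrow> 'a form \<Rightarrow> bool" where
  "htsat (X, Y) (Atom a) = (a \<in> X)"
| "htsat (X, Y) Bot = False"
| "htsat (X, Y) (And \<phi> \<psi>) = (htsat (X, Y) \<phi> \<and> htsat (X, Y) \<psi>)"
| "htsat (X, Y) (Or \<phi> \<psi>) = (htsat (X, Y) \<phi> \<or> htsat (X, Y) \<psi>)"
| "htsat (X, Y) (Imp \<phi> \<psi>) =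
     ((\<not> htsat (X, Y) \<phi> \<or> htsat (X, Y) \<psi>) \<and> csat Y (Imp \<phi> \<psi>))"

definition htsat_th :: "'a set \<times> 'a set \<Rightarrow> 'a form set \<Rightarrow> bool" where
  "htsat_th M \<Gamma> = (\<forall>\<phi>\<in>\<Gamma>. htsat M \<phi>)"

definition csat_th :: "'a set \<Rightarrow> 'a form set \<Rightarrow> bool" where
  "csat_th Y \<Gamma> = (\<forall>\<phi>\<in>\<Gamma>. csat Y \<phi>)"

definition ht_interp :: "'a set \<Rightarrow> 'a set \<times> 'a set \<Rightarrow> bool" where
  "ht_interp L' M = (fst M \<subseteq> snd M \<and> snd M \<subseteq> L')"

definition here_countermodel :: "'a set \<times> 'a set \<Rightarrow> 'a form set \<Rightarrow> bool" where
  "here_countermodel M \<Gamma> = (\<not> htsat_th M \<Gamma> \<and> csat_th (snd M) \<Gamma>)"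

definition Es :: "'a set \<Rightarrow> 'a form set \<Rightarrow> ('a set \<times> 'a set) set" where
  "Es L' \<Gamma> = {M. ht_interp L' M \<and>
     ((fst M = snd M \<and> htsat_th M \<Gamma>) \<or> here_countermodel M \<Gamma>)}"

definition restrict :: "'a set \<times> 'a set \<Rightarrow> 'a set \<Rightarrow> 'a set \<times> 'a set" where
  "restrict M L = (fst M \<inter> L, snd M \<inter> L)"

definition totality_preserving :: "'a set \<times> 'a set \<Rightarrow> 'a set \<Rightarrow> bool" where
  "totality_preserving M L =
     (fst M \<subset> snd M \<longrightarrow> fst M \<inter> L \<subset> snd M \<inter> L)"

definition BigAnd :: "'a form set \<Rightarrow> 'a form" where
  "BigAnd S = foldr And (SOME xs. set xs = S \<and> distinct xs) Top"

definition BigOr :: "'a form set \<Rightarrow> 'a form" where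
  "BigOr S = foldr Or (SOME xs. set xs = S \<and> distinct xs) Bot"

definition Gamma_phi :: "'a set \<Rightarrow> 'a form set \<Rightarrow> 'a form \<Rightarrow> 'a form set" where
  "Gamma_phi L \<Gamma> \<phi> = {Neg (Neg \<psi>) | \<psi>. \<psi> \<in> \<Gamma>}
      \<union> {Imp \<phi> (Imp (Neg (Neg (Atom a))) (Atom a)) | a. a \<in> L}"

end

theory Submission
  imports Defs
begin

lemma csat_loc: "atoms \<phi> \<subseteq> L \<Longrightarrow> csat (Y \<inter> L) \<phi> = csat Y \<phi>"
  by (induction \<phi>) auto

lemma ht_loc: "atoms \<phi> \<subseteq> L \<Longrightarrow> htsat (X \<inter> L, Y \<inter> L) \<phi> = htsat (X, Y) \<phi>"
  by (induction \<phi>) (auto simp: csat_loc)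

lemma persist: "X \<subseteq> Y \<Longrightarrow> htsat (X, Y) \<phi> \<Longrightarrow> csat Y \<phi>"
  by (induction \<phi>) auto

lemma total: "htsat (Y, Y) \<phi> = csat Y \<phi>"
  by (induction \<phi>) auto

lemma foldr_and: "htsat M (foldr And xs Top) = (\<forall>x\<in>set xs. htsat M x)"
  apply (induction xs) apply (cases M) apply (auto simp: Top_def)
  by (metis htsat.simps(3) surj_pair)+

lemma foldr_or: "htsat M (foldr Or xs Bot) = (\<exists>x\<in>set xs. htsat M x)"
  apply (induction xs) apply (cases M) apply auto
  by (metis htsat.simps(4) surj_pair)+

lemma someL: "finite S \<Longrightarrow> set (SOME xs. set xs = S \<and> distinct xs) = S"
  by (metis (mono_tags, lifting) finite_distinct_list someI_ex)

lemma BigAnd_sem: "finite S \<Longrightarrow> htsat M (BigAnd S) = (\<forall>x\<in>S. htsat M x)"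
  by (simp add: BigAnd_def foldr_and someL)

lemma BigOr_sem: "finite S \<Longrightarrow> htsat M (BigOr S) = (\<exists>x\<in>S. htsat M x)"
  by (simp add: BigOr_def foldr_or someL)

lemma negneg: "X \<subseteq> Y \<Longrightarrow> htsat (X, Y) (Neg (Neg \<psi>)) = csat Y \<psi>"
  using persist[of X Y \<psi>] by (auto simp: Neg_def)

lemma imp_atom: "htsat (X, Y) (Imp \<phi> (Imp (Neg (Neg (Atom a))) (Atom a)))
   = (htsat (X, Y) \<phi> \<longrightarrow> (a \<in> Y \<longrightarrow> a \<in> X))"
  by (auto simp: Neg_def)

theorem mainTheorem8:
  fixes L L' :: "'a set" and \<Gamma> :: "'a form set" and M :: "'a set \<times> 'a set"
  assumes "finite L" and "finite \<Gamma>" and "\<Gamma> \<noteq> {}"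
    and "\<forall>\<phi>\<in>\<Gamma>. atoms \<phi> \<subseteq> L"
    and "L \<subseteq> L'"
    and "ht_interp L' M"
  shows "M \<in> Es L' \<Gamma> \<longleftrightarrow>
    (totality_preserving M L \<and>
     htsat (restrict M L) (BigOr ((\<lambda>\<phi>. BigAnd (Gamma_phi L \<Gamma> \<phi>)) ` \<Gamma>)))"
proof -
  obtain X Y where M: "M = (X, Y)" by (cases M)
  have XY: "X \<subseteq> Y" using assms(6) M by (simp add: ht_interp_def)
  have XYL: "X \<inter> L \<subseteq> Y \<inter> L" using XY by blast
  have fin: "\<And>\<phi>. finite (Gamma_phi L \<Gamma> \<phi>)"
    using assms(1,2) by (simp add: Gamma_phi_def)
  have G: "htsat (X \<inter> L, Y \<inter> L) (BigAnd (Gamma_phi L \<Gamma> \<phi>)) =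
     (csat_th Y \<Gamma> \<and> (htsat (X, Y) \<phi> \<longrightarrow> X \<inter> L = Y \<inter> L))" if that: "\<phi> \<in> \<Gamma>" for \<phi>
  proof -
    have a: "atoms \<phi> \<subseteq> L" using assms(4) that by auto
    have "htsat (X \<inter> L, Y \<inter> L) (BigAnd (Gamma_phi L \<Gamma> \<phi>)) =
      ((\<forall>\<psi>\<in>\<Gamma>. csat (Y \<inter> L) \<psi>) \<and> (\<forall>a\<in>L. htsat (X \<inter> L, Y \<inter> L) \<phi> \<longrightarrow> (a \<in> Y \<inter> L \<longrightarrow> a \<in> X \<inter> L)))"
    proof -
      have "htsat (X \<inter> L, Y \<inter> L) (BigAnd (Gamma_phi L \<Gamma> \<phi>)) = (\<forall>x\<in>Gamma_phi L \<Gamma> \<phi>. htsat (X \<inter> L, Y \<inter> L) x)"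
        by (rule BigAnd_sem[OF fin])
      also have "\<dots> = ((\<forall>\<psi>\<in>\<Gamma>. csat (Y \<inter> L) \<psi>) \<and> (\<forall>a\<in>L. htsat (X \<inter> L, Y \<inter> L) \<phi> \<longrightarrow> (a \<in> Y \<inter> L \<longrightarrow> a \<in> X \<inter> L)))"
        unfolding Gamma_phi_def using negneg[OF XYL] imp_atom[of "X \<inter> L" "Y \<inter> L"]
        by blast
      finally show ?thesis .
    qed
    also have "\<dots> = (csat_th Y \<Gamma> \<and> (htsat (X, Y) \<phi> \<longrightarrow> X \<inter> L = Y \<inter> L))"
      using a assms(4) XYL by (auto simp: csat_loc ht_loc csat_th_def)
    finally show "htsat (X \<inter> L, Y \<inter> L) (BigAnd (Gamma_phi L \<Gamma> \<phi>)) =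
     (csat_th Y \<Gamma> \<and> (htsat (X, Y) \<phi> \<longrightarrow> X \<inter> L = Y \<inter> L))" .
  qed
  have R: "htsat (restrict M L) (BigOr ((\<lambda>\<phi>. BigAnd (Gamma_phi L \<Gamma> \<phi>)) ` \<Gamma>)) =
     (csat_th Y \<Gamma> \<and> (\<exists>\<phi>\<in>\<Gamma>. htsat (X, Y) \<phi> \<longrightarrow> X \<inter> L = Y \<inter> L))"
    using assms(2,3) by (auto simp: M restrict_def BigOr_sem G)
  have agree: "X \<inter> L = Y \<inter> L \<Longrightarrow> \<phi> \<in> \<Gamma> \<Longrightarrow> htsat (X, Y) \<phi> = csat Y \<phi>" for \<phi>
    using assms(4) ht_loc[of \<phi> L X Y] ht_loc[of \<phi> L Y Y] total[of Y \<phi>] by auto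
  show ?thesis
    unfolding R
    using assms(6) XY XYL agree assms(3)
    by (auto simp: M Es_def here_countermodel_def totality_preserving_def htsat_th_def csat_th_def)
qed

end
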